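(* Let $\mathbb{C}^{\mathbb{N}}$ be the Fréchet algebra of all complex sequences with pointwise multiplication and the product topology, and let $\mathcal{U}$ be a countably incomplete $\aleph(\mathbb{C}^{\mathbb{N}})^+$-good ultrafilter on an index set $I$. Then $(\mathbb{C}^{\mathbb{N}})_{\mathcal{U}}$ is isomorphic (as a Fréchet algebra) to $\mathbb{C}^{\mathbb{N}}$, has the approximation property, and is contractible.
   Context: For a Fréchet algebra $(\mathcal{A},(P_n))$ the ultrapower $(\mathcal{A})_{\mathcal{U}}=\ell_\infty(I,\mathcal{A})/\mathcal{N}_{\mathcal{U}}$ ($\ell_\infty$: families with $\sup_iP_n(x_i)<\infty$ for all $n$; $\mathcal{N}_{\mathcal{U}}$: those with $\lim_{\mathcal{U}}P_n(x_i)=0$ for all $n$), with seminorms $\lim_{\mathcal{U}}P_n(x_i)$ and coordinatewise product. A Fréchet algebra is contractible if it has a diagonal: $T\in\mathcal{A}\hat\otimes\mathcal{A}$ (completed projective tensor product) with $\Delta_{\mathcal{A}}(T)a=a$ and $a\cdot T=T\cdot a$ for all $a$, where $\Delta_{\mathcal{A}}(a\otimes b)=ab$, $a\cdot(b\otimes c)=ab\otimes c$, $(b\otimes c)\cdot a=b\otimes ca$. $\aleph(E)=\max(\aleph_U(E),\aleph_B(E))$ (least cardinalities of a zero-neighbourhood base and of a fundamental family of bounded sets); in this paper $\aleph^+=2^\aleph$. $\mathcal{U}$ is $\aleph$-good if for each cardinal $\beta\le\aleph$ and every monotonic $f:P_f(\beta)\to\mathcal{U}$ there is an additive $g:P_f(\beta)\to\mathcal{U}$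 with $g(u)\subseteq f(u)$ for all $u$ (monotonic: $u\subseteq w\Rightarrow f(u)\supseteq f(w)$; additive: $g(u\cup w)=g(u)\cap g(w)$). Approximation property: continuous finite rank operators are dense in the continuous operators for uniform convergence on precompact sets. *)

theory Defs
  imports "HOL-Analysis.Analysis" "HOL-Library.Equipollence"
begin

section \<open>Complex locally convex (Frechet) algebras given by a sequence of seminorms\<close>

record 'a fa =
  fa_carrier :: "'a set"
  fa_add :: "'a \<Rightarrow> 'a \<Rightarrow> 'a"
  fa_smul :: "complex \<Rightarrow> 'a \<Rightarrow> 'a"
  fa_zero :: "'a"
  fa_mul :: "'a \<Rightarrow> 'a \<Rightarrow> 'a"
  fa_sn :: "nat \<Rightarrow> 'a \<Rightarrow> real"

definition fa_sub :: "'a fa \<Rightarrow> 'a \<Rightarrow> 'a \<Rightarrow> 'a" where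
  "fa_sub A x y = fa_add A x (fa_smul A (-1) y)"

primrec fa_psum :: "'a fa \<Rightarrow> (nat \<Rightarrow> 'a) \<Rightarrow> nat \<Rightarrow> 'a" where
  "fa_psum A f 0 = fa_zero A"
| "fa_psum A f (Suc n) = fa_add A (fa_psum A f n) (f n)"

definition fa_sums :: "'a fa \<Rightarrow> (nat \<Rightarrow> 'a) \<Rightarrow> 'a \<Rightarrow> bool" where
  "fa_sums A f s \<longleftrightarrow> s \<in> fa_carrier A \<and>
     (\<forall>n. (\<lambda>N. fa_sn A n (fa_sub A (fa_psum A f N) s)) \<longlonglongrightarrow> 0)"

primrec fa_lc :: "'a fa \<Rightarrow> (complex \<times> 'a) list \<Rightarrow> 'a" where
  "fa_lc A [] = fa_zero A"
| "fa_lc A (p # ps) = fa_add A (fa_smul A (fst p) (snd p)) (fa_lc A ps)"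

definition fa_span :: "'a fa \<Rightarrow> 'a set \<Rightarrow> 'a set" where
  "fa_span A F = {fa_lc A ps | ps. set (map snd ps) \<subseteq> F}"

definition fa_linear :: "'a fa \<Rightarrow> 'b fa \<Rightarrow> ('a \<Rightarrow> 'b) \<Rightarrow> bool" where
  "fa_linear A B T \<longleftrightarrow> (\<forall>x\<in>fa_carrier A. T x \<in> fa_carrier B) \<and>
     (\<forall>x\<in>fa_carrier A. \<forall>y\<in>fa_carrier A. T (fa_add A x y) = fa_add B (T x) (T y)) \<and>
     (\<forall>c. \<forall>x\<in>fa_carrier A. T (fa_smul A c x) = fa_smul B c (T x))"

definition fa_cont :: "'a fa \<Rightarrow> 'b fa \<Rightarrow> ('a \<Rightarrow> 'b) \<Rightarrow> bool" where
  "fa_cont A B T \<longleftrightarrow> (\<forall>n. \<exists>M C. finite M \<and>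
     (\<forall>x\<in>fa_carrier A. fa_sn B n (T x) \<le> C * (\<Sum>m\<in>M. fa_sn A m x)))"

definition fa_isomorphic :: "'a fa \<Rightarrow> 'b fa \<Rightarrow> bool" where
  "fa_isomorphic A B \<longleftrightarrow> (\<exists>\<Phi>. bij_betw \<Phi> (fa_carrier A) (fa_carrier B) \<and> fa_linear A B \<Phi> \<and>
     (\<forall>x\<in>fa_carrier A. \<forall>y\<in>fa_carrier A. \<Phi> (fa_mul A x y) = fa_mul B (\<Phi> x) (\<Phi> y)) \<and>
     fa_cont A B \<Phi> \<and> fa_cont B A (inv_into (fa_carrier A) \<Phi>))"

definition fa_cont_op :: "'a fa \<Rightarrow> ('a \<Rightarrow> 'a) \<Rightarrow> bool" where
  "fa_cont_op A T \<longleftrightarrow> fa_linear A A T \<and> fa_cont A A T"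

definition fa_finite_rank :: "'a fa \<Rightarrow> ('a \<Rightarrow> 'a) \<Rightarrow> bool" where
  "fa_finite_rank A T \<longleftrightarrow> (\<exists>F. finite F \<and> F \<subseteq> fa_carrier A \<and> T ` fa_carrier A \<subseteq> fa_span A F)"

definition fa_precompact :: "'a fa \<Rightarrow> 'a set \<Rightarrow> bool" where
  "fa_precompact A K \<longleftrightarrow> K \<subseteq> fa_carrier A \<and>
     (\<forall>N \<epsilon>. finite N \<and> \<epsilon> > 0 \<longrightarrow> (\<exists>F. finite F \<and> F \<subseteq> fa_carrier A \<and>
        K \<subseteq> (\<Union>x\<in>F. {y \<in> fa_carrier A. \<forall>n\<in>N. fa_sn A n (fa_sub A y x) < \<epsilon>})))"

definition has_AP :: "'a fa \<Rightarrow> bool" where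
  "has_AP A \<longleftrightarrow> (\<forall>T K N \<epsilon>. fa_cont_op A T \<and> fa_precompact A K \<and> finite N \<and> \<epsilon> > 0 \<longrightarrow>
     (\<exists>F. fa_cont_op A F \<and> fa_finite_rank A F \<and>
        (\<forall>x\<in>K. \<forall>n\<in>N. fa_sn A n (fa_sub A (T x) (F x)) < \<epsilon>)))"

text \<open>Jointly continuous bilinear forms on A x A (= the dual of the completed projective
  tensor product).\<close>
definition fa_cont_bilinear :: "'a fa \<Rightarrow> ('a \<Rightarrow> 'a \<Rightarrow> complex) \<Rightarrow> bool" where
  "fa_cont_bilinear A \<beta> \<longleftrightarrow>
     (\<forall>x\<in>fa_carrier A. \<forall>y\<in>fa_carrier A. \<forall>z\<in>fa_carrier A.
        \<beta> (fa_add A x y) z = \<beta> x z + \<beta> y z \<and> \<beta> z (fa_add A x y) = \<beta> z x + \<beta> z y) \<and>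
     (\<forall>c. \<forall>x\<in>fa_carrier A. \<forall>y\<in>fa_carrier A.
        \<beta> (fa_smul A c x) y = c * \<beta> x y \<and> \<beta> x (fa_smul A c y) = c * \<beta> x y) \<and>
     (\<exists>M C. finite M \<and> (\<forall>x\<in>fa_carrier A. \<forall>y\<in>fa_carrier A.
        cmod (\<beta> x y) \<le> C * (\<Sum>m\<in>M. fa_sn A m x) * (\<Sum>m\<in>M. fa_sn A m y)))"

text \<open>An element T of the completed projective tensor product A \<otimes> A is represented
  (Grothendieck) as an absolutely convergent series \<Sum>k x_k \<otimes> y_k; its image under
  \<Delta> is \<Sum>k x_k y_k, and two such elements agree iff all continuous bilinear forms agree on them.
  A diagonal: \<Delta>(T) a = a and a\<cdot>T = T\<cdot>a for all a.\<close>
definition fa_contractible :: "'a fa \<Rightarrow> bool" where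
  "fa_contractible A \<longleftrightarrow> (\<exists>x y :: nat \<Rightarrow> 'a.
     (\<forall>k. x k \<in> fa_carrier A \<and> y k \<in> fa_carrier A) \<and>
     (\<forall>m n. summable (\<lambda>k. fa_sn A m (x k) * fa_sn A n (y k))) \<and>
     (\<exists>d. fa_sums A (\<lambda>k. fa_mul A (x k) (y k)) d \<and> (\<forall>a\<in>fa_carrier A. fa_mul A d a = a)) \<and>
     (\<forall>a\<in>fa_carrier A. \<forall>\<beta>. fa_cont_bilinear A \<beta> \<longrightarrow>
        (\<lambda>k. \<beta> (fa_mul A a (x k)) (y k) - \<beta> (x k) (fa_mul A (y k) a)) sums 0))"

definition CN :: "(nat \<Rightarrow> complex) fa" where
  "CN = \<lparr> fa_carrier = UNIV,
          fa_add = (\<lambda>x y k. x k + y k),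
          fa_smul = (\<lambda>c x k. c * x k),
          fa_zero = (\<lambda>k. 0),
          fa_mul = (\<lambda>x y k. x k * y k),
          fa_sn = (\<lambda>n x. Max ((\<lambda>k. cmod (x k)) ` {..n})) \<rparr>"

section \<open>Ultrafilters and ultrapowers\<close>

definition ultrafilter_on :: "'i set set \<Rightarrow> bool" where
  "ultrafilter_on U \<longleftrightarrow> {} \<notin> U \<and> UNIV \<in> U \<and>
     (\<forall>X Y. X \<in> U \<and> X \<subseteq> Y \<longrightarrow> Y \<in> U) \<and>
     (\<forall>X Y. X \<in> U \<and> Y \<in> U \<longrightarrow> X \<inter> Y \<in> U) \<and>
     (\<forall>X. X \<in> U \<or> - X \<in> U)"

definition countably_incomplete :: "'i set set \<Rightarrow> bool" where
  "countably_incomplete U \<longleftrightarrow> (\<exists>S :: nat \<Rightarrow> 'i set. (\<forall>n. S n \<in> U) \<and> (\<Inter>n. S n) = {})"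

definition Ulim :: "'i set set \<Rightarrow> ('i \<Rightarrow> real) \<Rightarrow> real \<Rightarrow> bool" where
  "Ulim U a L \<longleftrightarrow> (\<forall>\<epsilon>>0. {i. \<bar>a i - L\<bar> < \<epsilon>} \<in> U)"

definition ulim :: "'i set set \<Rightarrow> ('i \<Rightarrow> real) \<Rightarrow> real" where
  "ulim U a = (THE L. Ulim U a L)"

definition linf :: "'a fa \<Rightarrow> ('i \<Rightarrow> 'a) set" where
  "linf A = {x. (\<forall>i. x i \<in> fa_carrier A) \<and> (\<forall>n. bdd_above (range (\<lambda>i. fa_sn A n (x i))))}"

definition urel :: "'a fa \<Rightarrow> 'i set set \<Rightarrow> (('i \<Rightarrow> 'a) \<times> ('i \<Rightarrow> 'a)) set" where
  "urel A U = {(x, y). x \<in> linf A \<and> y \<in> linf A \<and>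
     (\<forall>n. Ulim U (\<lambda>i. fa_sn A n (fa_sub A (x i) (y i))) 0)}"

definition ucls :: "'a fa \<Rightarrow> 'i set set \<Rightarrow> ('i \<Rightarrow> 'a) \<Rightarrow> ('i \<Rightarrow> 'a) set" where
  "ucls A U x = urel A U `` {x}"

definition urep :: "('i \<Rightarrow> 'a) set \<Rightarrow> 'i \<Rightarrow> 'a" where
  "urep X = (SOME x. x \<in> X)"

definition upow :: "'a fa \<Rightarrow> 'i set set \<Rightarrow> ('i \<Rightarrow> 'a) set fa" where
  "upow A U = \<lparr> fa_carrier = linf A // urel A U,
     fa_add = (\<lambda>X Y. ucls A U (\<lambda>i. fa_add A (urep X i) (urep Y i))),
     fa_smul = (\<lambda>c X. ucls A U (\<lambda>i. fa_smul A c (urep X i))),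
     fa_zero = ucls A U (\<lambda>i. fa_zero A),
     fa_mul = (\<lambda>X Y. ucls A U (\<lambda>i. fa_mul A (urep X i) (urep Y i))),
     fa_sn = (\<lambda>n X. ulim U (\<lambda>i. fa_sn A n (urep X i))) \<rparr>"

section \<open>Cardinal invariants and good ultrafilters\<close>

definition fa_zero_nbhd :: "'a fa \<Rightarrow> 'a set \<Rightarrow> bool" where
  "fa_zero_nbhd A W \<longleftrightarrow> W \<subseteq> fa_carrier A \<and> (\<exists>N \<epsilon>. finite N \<and> \<epsilon> > 0 \<and>
     {x \<in> fa_carrier A. \<forall>n\<in>N. fa_sn A n x < \<epsilon>} \<subseteq> W)"

definition fa_nbhd_base :: "'a fa \<Rightarrow> 'a set set \<Rightarrow> bool" where
  "fa_nbhd_base A V \<longleftrightarrow> (\<forall>W\<in>V. fa_zero_nbhd A W) \<and>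
     (\<forall>W. fa_zero_nbhd A W \<longrightarrow> (\<exists>W'\<in>V. W' \<subseteq> W))"

definition fa_bounded :: "'a fa \<Rightarrow> 'a set \<Rightarrow> bool" where
  "fa_bounded A S \<longleftrightarrow> S \<subseteq> fa_carrier A \<and> (\<forall>n. bdd_above (fa_sn A n ` S))"

definition fa_fund_bounded :: "'a fa \<Rightarrow> 'a set set \<Rightarrow> bool" where
  "fa_fund_bounded A Bd \<longleftrightarrow> (\<forall>S\<in>Bd. fa_bounded A S) \<and>
     (\<forall>S. fa_bounded A S \<longrightarrow> (\<exists>S'\<in>Bd. S \<subseteq> S'))"

text \<open>Minimal-cardinality witnesses of aleph_U and aleph_B.\<close>
definition min_nbhd_base :: "'a fa \<Rightarrow> 'a set set \<Rightarrow> bool" where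
  "min_nbhd_base A V \<longleftrightarrow> fa_nbhd_base A V \<and> (\<forall>V'. fa_nbhd_base A V' \<longrightarrow> V \<lesssim> V')"

definition min_fund_bounded :: "'a fa \<Rightarrow> 'a set set \<Rightarrow> bool" where
  "min_fund_bounded A Bd \<longleftrightarrow> fa_fund_bounded A Bd \<and> (\<forall>Bd'. fa_fund_bounded A Bd' \<longrightarrow> Bd \<lesssim> Bd')"

definition good_for :: "'i set set \<Rightarrow> 'b set \<Rightarrow> bool" where
  "good_for U B \<longleftrightarrow> (\<forall>f :: 'b set \<Rightarrow> 'i set.
     ((\<forall>u. finite u \<and> u \<subseteq> B \<longrightarrow> f u \<in> U) \<and>
      (\<forall>u w. finite w \<and> w \<subseteq> B \<and> u \<subseteq> w \<longrightarrow> f w \<subseteq> f u)) \<longrightarrow>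
     (\<exists>g :: 'b set \<Rightarrow> 'i set.
        (\<forall>u. finite u \<and> u \<subseteq> B \<longrightarrow> g u \<in> U \<and> g u \<subseteq> f u) \<and>
        (\<forall>u w. finite u \<and> u \<subseteq> B \<and> finite w \<and> w \<subseteq> B \<longrightarrow> g (u \<union> w) = g u \<inter> g w)))"

text \<open>U is aleph(A)^+-good, where aleph = max(aleph_U, aleph_B) and aleph^+ = 2^aleph:
  the goodness condition holds for every cardinal \<le> 2^aleph, i.e. for every set of
  cardinality \<le> 2^aleph_U or \<le> 2^aleph_B; all such cardinals are represented by subsets of
  Pow V resp. Pow Bd for minimal witnesses V, Bd.\<close>
definition aleph_plus_good :: "'a fa \<Rightarrow> 'i set set \<Rightarrow> bool" where
  "aleph_plus_good A U \<longleftrightarrow>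
     (\<forall>V. min_nbhd_base A V \<longrightarrow> (\<forall>B. B \<subseteq> Pow V \<longrightarrow> good_for U B)) \<and>
     (\<forall>Bd. min_fund_bounded A Bd \<longrightarrow> (\<forall>B. B \<subseteq> Pow Bd \<longrightarrow> good_for U B))"

end

theory Submission imports Defs begin

definition UF :: "'i set set \<Rightarrow> 'i filter" where
  "UF U = Abs_filter (\<lambda>P. {i. P i} \<in> U)"

definition lv :: "'i set set \<Rightarrow> ('i \<Rightarrow> nat \<Rightarrow> complex) \<Rightarrow> nat \<Rightarrow> complex" where
  "lv U x = (\<lambda>k. Lim (UF U) (\<lambda>i. x i k))"

definition snC :: "nat \<Rightarrow> (nat \<Rightarrow> complex) \<Rightarrow> real" where
  "snC n z = Max ((\<lambda>k. cmod (z k)) ` {..n})"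

definition cls :: "'i set set \<Rightarrow> (nat \<Rightarrow> complex) \<Rightarrow> ('i \<Rightarrow> nat \<Rightarrow> complex) set" where
  "cls U z = {y \<in> linf CN. lv U y = z}"

definition Phi :: "'i set set \<Rightarrow> ('i \<Rightarrow> nat \<Rightarrow> complex) set \<Rightarrow> nat \<Rightarrow> complex" where
  "Phi U X = lv U (urep X)"

lemma CN_simps: "fa_carrier CN = UNIV" "fa_add CN = (\<lambda>x y k. x k + y k)"
  "fa_smul CN = (\<lambda>c x k. c * x k)" "fa_zero CN = (\<lambda>k. 0)"
  "fa_mul CN = (\<lambda>x y k. x k * y k)" "fa_sn CN = snC"
  by (simp_all add: CN_def snC_def fun_eq_iff)

lemma snC_ge: "k \<le> n \<Longrightarrow> cmod (z k) \<le> snC n z"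
  unfolding snC_def by (rule Max_ge) auto

lemma snC_le_iff: "snC n z \<le> B \<longleftrightarrow> (\<forall>k\<le>n. cmod (z k) \<le> B)"
  unfolding snC_def by (subst Max_le_iff) auto

lemma snC_nonneg: "0 \<le> snC n z"
  using snC_ge[of 0 n z] norm_ge_zero[of "z 0"] by linarith

lemma snC_mono: assumes "\<And>k. k \<le> n \<Longrightarrow> cmod (z k) \<le> cmod (w k)" shows "snC n z \<le> snC n w"
proof -
  have "cmod (z k) \<le> snC n w" if "k \<le> n" for k
    using assms[OF that] snC_ge[OF that, of w] by linarith
  then show ?thesis by (simp add: snC_le_iff)
qed

lemma snC_zero_iff: "snC n w = 0 \<longleftrightarrow> (\<forall>k\<le>n. w k = 0)"
proof
  assume "snC n w = 0"
  then show "\<forall>k\<le>n. w k = 0" using snC_ge[of _ n w] by (metis norm_le_zero_iff)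
next
  assume "\<forall>k\<le>n. w k = 0"
  then have "snC n w \<le> 0" by (simp add: snC_le_iff)
  then show "snC n w = 0" using snC_nonneg[of n w] by linarith
qed

lemma snC_Suc: "snC (Suc n) z = max (cmod (z (Suc n))) (snC n z)"
  unfolding snC_def by (simp add: atMost_Suc Max_insert)

lemma linf_iff: "x \<in> linf CN \<longleftrightarrow> (\<forall>k. \<exists>B. \<forall>i. cmod (x i k) \<le> B)"
proof
  assume "x \<in> linf CN"
  then have b: "\<forall>n. bdd_above (range (\<lambda>i. snC n (x i)))" by (simp add: linf_def CN_simps)
  show "\<forall>k. \<exists>B. \<forall>i. cmod (x i k) \<le> B"
  proof
    fix k
    obtain M where M: "\<And>i. snC k (x i) \<le> M" using b[rule_format, of k] unfolding bdd_above_def by blast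
    show "\<exists>B. \<forall>i. cmod (x i k) \<le> B"
    proof (intro exI allI)
      fix i show "cmod (x i k) \<le> M" using snC_ge[of k k "x i"] M[of i] by linarith
    qed
  qed
next
  assume "\<forall>k. \<exists>B. \<forall>i. cmod (x i k) \<le> B"
  from choice[OF this] obtain B where B: "\<forall>k i. cmod (x i k) \<le> B k" by blast
  have "bdd_above (range (\<lambda>i. snC n (x i)))" for n
  proof -
    have "snC n (x i) \<le> Max (B ` {..n})" for i
    proof -
      have "cmod (x i k) \<le> Max (B ` {..n})" if "k \<le> n" for k
      proof -
        have "B k \<le> Max (B ` {..n})" by (rule Max_ge) (use that in auto)
        then show ?thesis using B by (meson order_trans)
      qed
      then show ?thesis by (simp add: snC_le_iff)
    qed
    then show ?thesis unfolding bdd_above_def by blast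
  qed
  then show "x \<in> linf CN" by (simp add: linf_def CN_simps)
qed

context fixes U :: "'i set set" assumes uf: "ultrafilter_on U"
begin

lemma UF_eventually: "eventually P (UF U) \<longleftrightarrow> {i. P i} \<in> U"
proof -
  have "is_filter (\<lambda>P. {i. P i} \<in> U)"
  proof
    show "{i. True} \<in> U" using uf by (simp add: ultrafilter_on_def)
  next
    fix P Q assume "{i. P i} \<in> U" "{i. Q i} \<in> U"
    then have "{i. P i} \<inter> {i. Q i} \<in> U" using uf unfolding ultrafilter_on_def by blast
    then show "{i. P i \<and> Q i} \<in> U" by (simp add: Collect_conj_eq)
  next
    fix P Q assume "\<forall>x. P x \<longrightarrow> Q x" "{i. P i} \<in> U"
    then show "{i. Q i} \<in> U" using uf unfolding ultrafilter_on_def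
      by (metis (mono_tags, lifting) mem_Collect_eq subsetI)
  qed
  then show ?thesis unfolding UF_def by (simp add: eventually_Abs_filter)
qed

lemma UF_nontriv: "UF U \<noteq> bot"
  using uf by (simp add: trivial_limit_def UF_eventually ultrafilter_on_def)

lemma UF_compl: "\<not> eventually P (UF U) \<Longrightarrow> eventually (\<lambda>i. \<not> P i) (UF U)"
  using uf unfolding UF_eventually ultrafilter_on_def by (metis Collect_neg_eq)

lemma UF_conv_exists:
  assumes "\<forall>i. cmod (z i) \<le> B"
  shows "\<exists>L. (z \<longlongrightarrow> L) (UF U)"
proof -
  let ?F = "filtermap z (UF U)"
  have "compact (cball (0::complex) B)" by simp
  moreover have "?F \<noteq> bot" using UF_nontriv by (simp add: filtermap_bot_iff)
  moreover have "eventually (\<lambda>x. x \<in> cball 0 B) ?F" using assms by (simp add: eventually_filtermap)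
  ultimately obtain L where L: "inf (nhds L) ?F \<noteq> bot" unfolding compact_filter by blast
  have "(z \<longlongrightarrow> L) (UF U)"
    unfolding tendsto_def
  proof (intro allI impI)
    fix S assume S: "open S" "L \<in> S"
    show "eventually (\<lambda>i. z i \<in> S) (UF U)"
    proof (rule ccontr)
      assume "\<not> ?thesis"
      then have "eventually (\<lambda>i. z i \<notin> S) (UF U)" by (rule UF_compl)
      hence "eventually (\<lambda>x. x \<notin> S) ?F" by (simp add: eventually_filtermap)
      moreover have "eventually (\<lambda>x. x \<in> S) (nhds L)" using S eventually_nhds by blast
      ultimately have "eventually (\<lambda>x. False) (inf (nhds L) ?F)" unfolding eventually_inf by blast
      thus False using L by (simp add: eventually_False)
    qed
  qed
  thus ?thesis by blast
qed

lemma Ulim_iff: "Ulim U f L \<longleftrightarrow> (f \<longlongrightarrow> L) (UF U)"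
  unfolding Ulim_def tendsto_iff dist_real_def UF_eventually by simp

lemma ulim_eq: "(f \<longlongrightarrow> L) (UF U) \<Longrightarrow> ulim U f = L"
  unfolding ulim_def Ulim_iff using tendsto_unique[OF UF_nontriv] by blast

lemma lv_tendsto: "x \<in> linf CN \<Longrightarrow> ((\<lambda>i. x i k) \<longlongrightarrow> lv U x k) (UF U)"
  unfolding linf_iff lv_def
  by (metis UF_conv_exists UF_nontriv tendsto_Lim)

lemma lv_unique: "(\<And>k. ((\<lambda>i. x i k) \<longlongrightarrow> z k) (UF U)) \<Longrightarrow> lv U x = z"
  unfolding lv_def using tendsto_Lim[OF UF_nontriv] by blast

lemma snC_tendsto: "(\<And>k. ((\<lambda>i. x i k) \<longlongrightarrow> z k) (UF U)) \<Longrightarrow> ((\<lambda>i. snC n (x i)) \<longlongrightarrow> snC n z) (UF U)"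
proof (induction n)
  case 0
  then show ?case by (simp add: snC_def tendsto_norm)
next
  case (Suc n)
  then show ?case unfolding snC_Suc by (intro tendsto_max tendsto_norm) auto
qed

lemma const_linf: "(\<lambda>i. z) \<in> linf CN"
  unfolding linf_iff by blast

lemma lv_const: "lv U (\<lambda>i. z) = z"
  by (rule lv_unique) simp

lemma urel_iff: "(x, y) \<in> urel CN U \<longleftrightarrow> x \<in> linf CN \<and> y \<in> linf CN \<and> lv U x = lv U y"
proof -
  have "(\<forall>n. Ulim U (\<lambda>i. fa_sn CN n (fa_sub CN (x i) (y i))) 0) \<longleftrightarrow> lv U x = lv U y"
    if xy: "x \<in> linf CN" "y \<in> linf CN"
  proof -
    have e: "fa_sub CN (x i) (y i) = (\<lambda>k. x i k - y i k)" for i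
      by (simp add: fa_sub_def CN_simps)
    have t: "((\<lambda>i. snC n (\<lambda>k. x i k - y i k)) \<longlongrightarrow> snC n (\<lambda>k. lv U x k - lv U y k)) (UF U)" for n
      by (rule snC_tendsto) (intro tendsto_diff lv_tendsto xy)
    have "Ulim U (\<lambda>i. fa_sn CN n (fa_sub CN (x i) (y i))) 0 \<longleftrightarrow> snC n (\<lambda>k. lv U x k - lv U y k) = 0" for n
      unfolding e Ulim_iff CN_simps using tendsto_unique[OF UF_nontriv t] t by metis
    then show ?thesis by (auto simp: snC_zero_iff fun_eq_iff)
  qed
  then show ?thesis unfolding urel_def by auto
qed

lemma ucls_eq: "x \<in> linf CN \<Longrightarrow> ucls CN U x = cls U (lv U x)"
  unfolding ucls_def cls_def using urel_iff by auto

lemma cls_nonempty: "(\<lambda>i. z) \<in> cls U z"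
  unfolding cls_def using const_linf lv_const by simp

lemma carrier_upow: "fa_carrier (upow CN U) = range (cls U)"
proof -
  have "linf CN // urel CN U = range (cls U)"
    unfolding quotient_def
  proof safe
    fix x :: "'i \<Rightarrow> nat \<Rightarrow> complex" assume "x \<in> linf CN"
    then show "urel CN U `` {x} \<in> range (cls U)" using ucls_eq[of x] unfolding ucls_def by auto
  next
    fix z
    have "cls U z = urel CN U `` {\<lambda>i. z}" using ucls_eq[OF const_linf, of z] lv_const
      unfolding ucls_def by simp
    then show "cls U z \<in> (\<Union>x\<in>linf CN. {urel CN U `` {x}})" using const_linf by blast
  qed
  then show ?thesis by (simp add: upow_def)
qed

lemma urep_cls: "urep (cls U z) \<in> cls U z"
  unfolding urep_def by (rule someI[of _ "\<lambda>i. z"]) (rule cls_nonempty)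

lemma urep_cls_linf: "urep (cls U z) \<in> linf CN"
  using urep_cls unfolding cls_def by blast

lemma lv_urep_cls: "lv U (urep (cls U z)) = z"
  using urep_cls unfolding cls_def by blast

lemma Phi_cls: "Phi U (cls U z) = z"
  unfolding Phi_def by (rule lv_urep_cls)

lemma cls_inj: "inj (cls U)"
  by (metis Phi_cls injI)

lemma lin_ops:
  assumes x: "x \<in> linf CN" and y: "y \<in> linf CN"
  shows "(\<lambda>i k. x i k + y i k) \<in> linf CN" "lv U (\<lambda>i k. x i k + y i k) = (\<lambda>k. lv U x k + lv U y k)"
    "(\<lambda>i k. c * x i k) \<in> linf CN" "lv U (\<lambda>i k. c * x i k) = (\<lambda>k. c * lv U x k)"
    "(\<lambda>i k. x i k * y i k) \<in> linf CN" "lv U (\<lambda>i k. x i k * y i k) = (\<lambda>k. lv U x k * lv U y k)"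
proof -
  obtain B1 where B1: "\<And>k i. cmod (x i k) \<le> B1 k" using x unfolding linf_iff by metis
  obtain B2 where B2: "\<And>k i. cmod (y i k) \<le> B2 k" using y unfolding linf_iff by metis
  have "cmod (x i k + y i k) \<le> B1 k + B2 k" for i k
    using norm_triangle_ineq[of "x i k" "y i k"] add_mono[OF B1 B2] by (rule order_trans)
  then show "(\<lambda>i k. x i k + y i k) \<in> linf CN" unfolding linf_iff by blast
  have "cmod (c * x i k) \<le> cmod c * B1 k" for i k
    by (simp add: norm_mult mult_left_mono B1)
  then show "(\<lambda>i k. c * x i k) \<in> linf CN" unfolding linf_iff by blast
  have "cmod (x i k * y i k) \<le> B1 k * B2 k" for i k
  proof -
    have "0 \<le> B1 k" using B1[of i k] norm_ge_zero[of "x i k"] by linarith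
    then show ?thesis unfolding norm_mult by (intro mult_mono B1 B2) simp_all
  qed
  then show "(\<lambda>i k. x i k * y i k) \<in> linf CN" unfolding linf_iff by blast
  show "lv U (\<lambda>i k. x i k + y i k) = (\<lambda>k. lv U x k + lv U y k)"
    by (rule lv_unique) (intro tendsto_add lv_tendsto x y)
  show "lv U (\<lambda>i k. c * x i k) = (\<lambda>k. c * lv U x k)"
    by (rule lv_unique) (intro tendsto_mult tendsto_const lv_tendsto x)
  show "lv U (\<lambda>i k. x i k * y i k) = (\<lambda>k. lv U x k * lv U y k)"
    by (rule lv_unique) (intro tendsto_mult lv_tendsto x y)
qed

lemma add_cls: "fa_add (upow CN U) (cls U a) (cls U b) = cls U (\<lambda>k. a k + b k)"
  using lin_ops(1,2)[OF urep_cls_linf[of a] urep_cls_linf[of b]]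
  by (simp add: upow_def CN_simps ucls_eq lv_urep_cls)

lemma smul_cls: "fa_smul (upow CN U) c (cls U a) = cls U (\<lambda>k. c * a k)"
  using lin_ops(3,4)[OF urep_cls_linf[of a] urep_cls_linf[of a], of c]
  by (simp add: upow_def CN_simps ucls_eq lv_urep_cls)

lemma mul_cls: "fa_mul (upow CN U) (cls U a) (cls U b) = cls U (\<lambda>k. a k * b k)"
  using lin_ops(5,6)[OF urep_cls_linf[of a] urep_cls_linf[of b]]
  by (simp add: upow_def CN_simps ucls_eq lv_urep_cls)

lemma zero_cls: "fa_zero (upow CN U) = cls U (\<lambda>k. 0)"
  using ucls_eq[OF const_linf] lv_const by (simp add: upow_def CN_simps)

lemma sn_cls: "fa_sn (upow CN U) n (cls U a) = snC n a"
proof -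
  have "((\<lambda>i. snC n (urep (cls U a) i)) \<longlongrightarrow> snC n a) (UF U)"
    by (rule snC_tendsto) (metis lv_tendsto urep_cls_linf lv_urep_cls)
  then show ?thesis by (simp add: upow_def CN_simps ulim_eq)
qed

lemma sub_cls: "fa_sub (upow CN U) (cls U a) (cls U b) = cls U (\<lambda>k. a k - b k)"
  by (simp add: fa_sub_def smul_cls add_cls)

lemma cls_Phi: "X \<in> range (cls U) \<Longrightarrow> cls U (Phi U X) = X"
  using Phi_cls by auto

lemma lc_cls: "fa_lc (upow CN U) (map (\<lambda>p. (fst p, cls U (snd p))) ps) = cls U (fa_lc CN ps)"
  by (induction ps) (simp_all add: zero_cls CN_simps smul_cls add_cls)

lemma psum_cls: "fa_psum (upow CN U) (\<lambda>j. cls U (\<lambda>k. if k = j then 1 else 0)) N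
    = cls U (\<lambda>k. if k < N then 1 else 0)"
proof (induction N)
  case 0 then show ?case by (simp add: zero_cls)
next
  case (Suc N)
  have "(\<lambda>k. (if k < N then 1 else 0) + (if k = N then 1 else (0::complex))) = (\<lambda>k. if k < Suc N then 1 else 0)"
    by (auto simp: fun_eq_iff)
  then show ?case using Suc by (simp add: add_cls)
qed

lemma iso: "fa_isomorphic (upow CN U) CN"
proof -
  have inj: "inj_on (Phi U) (range (cls U))" by (auto simp: inj_on_def Phi_cls)
  have img: "Phi U ` range (cls U) = UNIV" by (simp add: image_image Phi_cls)
  have inv: "inv_into (range (cls U)) (Phi U) z = cls U z" for z
    by (rule inv_into_f_eq[OF inj]) (simp_all add: Phi_cls)
  show ?thesis
    unfolding fa_isomorphic_def carrier_upow
  proof (intro exI[of _ "Phi U"] conjI)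
    show "bij_betw (Phi U) (range (cls U)) (fa_carrier CN)"
      using inj img by (simp add: bij_betw_def CN_simps)
    show "fa_linear (upow CN U) CN (Phi U)"
      unfolding fa_linear_def carrier_upow by (auto simp: CN_simps add_cls smul_cls Phi_cls)
    show "\<forall>x\<in>range (cls U). \<forall>y\<in>range (cls U). Phi U (fa_mul (upow CN U) x y) = fa_mul CN (Phi U x) (Phi U y)"
      by (auto simp: CN_simps mul_cls Phi_cls)
    show "fa_cont (upow CN U) CN (Phi U)"
      unfolding fa_cont_def
    proof
      fix n show "\<exists>M C. finite M \<and> (\<forall>x\<in>fa_carrier (upow CN U). fa_sn CN n (Phi U x) \<le> C * (\<Sum>m\<in>M. fa_sn (upow CN U) m x))"
        by (rule exI[of _ "{n}"], rule exI[of _ 1]) (auto simp: carrier_upow CN_simps sn_cls Phi_cls)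
    qed
    show "fa_cont CN (upow CN U) (inv_into (range (cls U)) (Phi U))"
      unfolding fa_cont_def
    proof
      fix n show "\<exists>M C. finite M \<and> (\<forall>x\<in>fa_carrier CN. fa_sn (upow CN U) n (inv_into (range (cls U)) (Phi U) x) \<le> C * (\<Sum>m\<in>M. fa_sn CN m x))"
        by (rule exI[of _ "{n}"], rule exI[of _ 1]) (auto simp: inv CN_simps sn_cls)
    qed
  qed
qed

lemma lc_CN: "fa_lc CN (map (\<lambda>j. (w j, (\<lambda>k. if k = j then 1 else 0))) (rev [0..<n])) = (\<lambda>k. if k < n then w k else 0)"
  by (induction n) (auto simp: CN_simps fun_eq_iff less_Suc_eq)

lemma AP: "has_AP (upow CN U)"
  unfolding has_AP_def
proof (intro allI impI)
  fix T K and N :: "nat set" and \<epsilon> :: real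
  assume H: "fa_cont_op (upow CN U) T \<and> fa_precompact (upow CN U) K \<and> finite N \<and> \<epsilon> > 0"
  define m where "m = Max (insert 0 N)"
  have mN: "\<forall>n\<in>N. n \<le> m" using H by (auto simp: m_def)
  define tr where "tr z = (\<lambda>k. if k \<le> m then z k else 0)" for z :: "nat \<Rightarrow> complex"
  define Tz where "Tz z = Phi U (T (cls U z))" for z
  define F where "F X = cls U (tr (Phi U (T X)))" for X
  have Tlin: "fa_linear (upow CN U) (upow CN U) T" and Tc: "fa_cont (upow CN U) (upow CN U) T"
    using H by (auto simp: fa_cont_op_def)
  have Tcls: "T (cls U z) = cls U (Tz z)" for z
    unfolding Tz_def by (rule cls_Phi[symmetric]) (use Tlin in \<open>auto simp: fa_linear_def carrier_upow\<close>)
  have Tadd: "Tz (\<lambda>k. a k + b k) = (\<lambda>k. Tz a k + Tz b k)" for a b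
  proof -
    have "cls U (Tz (\<lambda>k. a k + b k)) = T (fa_add (upow CN U) (cls U a) (cls U b))"
      by (simp add: Tcls add_cls)
    also have "\<dots> = fa_add (upow CN U) (T (cls U a)) (T (cls U b))"
      using Tlin by (auto simp: fa_linear_def carrier_upow)
    also have "\<dots> = cls U (\<lambda>k. Tz a k + Tz b k)" by (simp add: Tcls add_cls)
    finally show ?thesis using cls_inj by (simp add: inj_eq)
  qed
  have Tsmul: "Tz (\<lambda>k. c * a k) = (\<lambda>k. c * Tz a k)" for c a
  proof -
    have "cls U (Tz (\<lambda>k. c * a k)) = T (fa_smul (upow CN U) c (cls U a))"
      by (simp add: Tcls smul_cls)
    also have "\<dots> = fa_smul (upow CN U) c (T (cls U a))"
      using Tlin by (auto simp: fa_linear_def carrier_upow)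
    also have "\<dots> = cls U (\<lambda>k. c * Tz a k)" by (simp add: Tcls smul_cls)
    finally show ?thesis using cls_inj by (simp add: inj_eq)
  qed
  have Fcls: "F (cls U z) = cls U (tr (Tz z))" for z
    by (simp add: F_def Tz_def)
  have Flin: "fa_linear (upow CN U) (upow CN U) F"
  proof -
    have tra: "tr (\<lambda>k. p k + q k) = (\<lambda>k. tr p k + tr q k)" for p q by (simp add: tr_def fun_eq_iff)
    have trs: "tr (\<lambda>k. c * p k) = (\<lambda>k. c * tr p k)" for c p by (simp add: tr_def fun_eq_iff)
    show ?thesis unfolding fa_linear_def carrier_upow by (auto simp: Fcls add_cls smul_cls Tadd Tsmul tra trs)
  qed
  have Fc: "fa_cont (upow CN U) (upow CN U) F"
    unfolding fa_cont_def
  proof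
    fix n
    obtain M C where MC: "finite M" "\<forall>x\<in>fa_carrier (upow CN U). fa_sn (upow CN U) n (T x) \<le> C * (\<Sum>m\<in>M. fa_sn (upow CN U) m x)"
      using Tc unfolding fa_cont_def by blast
    have "fa_sn (upow CN U) n (F (cls U z)) \<le> C * (\<Sum>m\<in>M. fa_sn (upow CN U) m (cls U z))" for z
    proof -
      have "fa_sn (upow CN U) n (F (cls U z)) = snC n (tr (Tz z))" by (simp add: Fcls sn_cls)
      also have "\<dots> \<le> snC n (Tz z)" by (rule snC_mono) (simp add: tr_def)
      also have "\<dots> = fa_sn (upow CN U) n (T (cls U z))" by (simp add: Tcls sn_cls)
      also have "\<dots> \<le> C * (\<Sum>m\<in>M. fa_sn (upow CN U) m (cls U z))" using MC(2) by (simp add: carrier_upow)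
      finally show ?thesis .
    qed
    then show "\<exists>M C. finite M \<and> (\<forall>x\<in>fa_carrier (upow CN U). fa_sn (upow CN U) n (F x) \<le> C * (\<Sum>m\<in>M. fa_sn (upow CN U) m x))"
      using MC(1) by (auto simp: carrier_upow)
  qed
  have Ffr: "fa_finite_rank (upow CN U) F"
    unfolding fa_finite_rank_def
  proof (intro exI conjI)
    let ?G = "cls U ` (\<lambda>j k. if k = j then 1 else 0) ` {..m}"
    show "finite ?G" by simp
    show "?G \<subseteq> fa_carrier (upow CN U)" by (auto simp: carrier_upow)
    show "F ` fa_carrier (upow CN U) \<subseteq> fa_span (upow CN U) ?G"
    proof
      fix Y assume "Y \<in> F ` fa_carrier (upow CN U)"
      then obtain z where Y: "Y = F (cls U z)" by (auto simp: carrier_upow)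
      let ?ps = "map (\<lambda>j. (Tz z j, (\<lambda>k. if k = j then 1 else 0))) (rev [0..<Suc m])"
      have "Y = cls U (fa_lc CN ?ps)"
        unfolding Y Fcls lc_CN tr_def by (simp add: less_Suc_eq_le)
      also have "\<dots> = fa_lc (upow CN U) (map (\<lambda>p. (fst p, cls U (snd p))) ?ps)"
        by (rule lc_cls[symmetric])
      finally show "Y \<in> fa_span (upow CN U) ?G"
        unfolding fa_span_def by (intro CollectI exI[of _ "map (\<lambda>p. (fst p, cls U (snd p))) ?ps"]) auto
    qed
  qed
  have approx: "\<forall>x\<in>K. \<forall>n\<in>N. fa_sn (upow CN U) n (fa_sub (upow CN U) (T x) (F x)) < \<epsilon>"
  proof (intro ballI)
    fix X n assume X: "X \<in> K" and n: "n \<in> N"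
    have "X \<in> range (cls U)" using H X by (auto simp: fa_precompact_def carrier_upow)
    then obtain z where z: "X = cls U z" by auto
    have "fa_sn (upow CN U) n (fa_sub (upow CN U) (T X) (F X)) = snC n (\<lambda>k. Tz z k - tr (Tz z) k)"
      by (simp add: z Tcls Fcls sub_cls sn_cls)
    also have "\<dots> = 0" unfolding snC_zero_iff using mN n by (auto simp: tr_def)
    finally show "fa_sn (upow CN U) n (fa_sub (upow CN U) (T X) (F X)) < \<epsilon>" using H by simp
  qed
  show "\<exists>F. fa_cont_op (upow CN U) F \<and> fa_finite_rank (upow CN U) F \<and>
        (\<forall>x\<in>K. \<forall>n\<in>N. fa_sn (upow CN U) n (fa_sub (upow CN U) (T x) (F x)) < \<epsilon>)"
    using Flin Fc Ffr approx by (auto simp: fa_cont_op_def)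
qed

lemma contr: "fa_contractible (upow CN U)"
proof -
  define e where "e j = (\<lambda>k::nat. if k = j then 1 else (0::complex))" for j :: nat
  have ee: "(\<lambda>k. e j k * e j k) = e j" for j by (auto simp: e_def fun_eq_iff)
  have snz: "snC m (e j) = 0" if "m < j" for m j
    unfolding snC_zero_iff using that by (auto simp: e_def)
  show ?thesis
    unfolding fa_contractible_def
  proof (intro exI conjI allI ballI impI)
    show "cls U (e k) \<in> fa_carrier (upow CN U)" for k
      by (simp add: carrier_upow)
    show "cls U (e k) \<in> fa_carrier (upow CN U)" for k
      by (simp add: carrier_upow)
    show "summable (\<lambda>k. fa_sn (upow CN U) m (cls U (e k)) * fa_sn (upow CN U) n (cls U (e k)))" for m n
      by (rule summable_finite[of "{..m}"]) (auto simp: sn_cls snz)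
    show "fa_sums (upow CN U) (\<lambda>k. fa_mul (upow CN U) (cls U (e k)) (cls U (e k))) (cls U (\<lambda>k. 1))"
      unfolding fa_sums_def
    proof (intro conjI allI)
      show "cls U (\<lambda>k. 1) \<in> fa_carrier (upow CN U)" by (simp add: carrier_upow)
      fix n
      have f: "(\<lambda>k. fa_mul (upow CN U) (cls U (e k)) (cls U (e k))) = (\<lambda>j. cls U (\<lambda>k. if k = j then 1 else 0))"
        unfolding mul_cls ee by (simp add: e_def)
      have "eventually (\<lambda>N. fa_sn (upow CN U) n (fa_sub (upow CN U) (fa_psum (upow CN U)
          (\<lambda>k. fa_mul (upow CN U) (cls U (e k)) (cls U (e k))) N) (cls U (\<lambda>k. 1))) = 0) sequentially"
        unfolding eventually_sequentially
      proof (intro exI[of _ "Suc n"] allI impI)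
        fix N assume "Suc n \<le> N"
        then show "fa_sn (upow CN U) n (fa_sub (upow CN U) (fa_psum (upow CN U)
          (\<lambda>k. fa_mul (upow CN U) (cls U (e k)) (cls U (e k))) N) (cls U (\<lambda>k. 1))) = 0"
          unfolding f psum_cls sub_cls sn_cls snC_zero_iff by auto
      qed
      then show "(\<lambda>N. fa_sn (upow CN U) n (fa_sub (upow CN U) (fa_psum (upow CN U)
          (\<lambda>k. fa_mul (upow CN U) (cls U (e k)) (cls U (e k))) N) (cls U (\<lambda>k. 1)))) \<longlonglongrightarrow> 0"
        by (rule tendsto_eventually)
    qed
    show "fa_mul (upow CN U) (cls U (\<lambda>k. 1)) a = a" if "a \<in> fa_carrier (upow CN U)" for a
      using that by (auto simp: carrier_upow mul_cls)
    fix a \<beta> assume a: "a \<in> fa_carrier (upow CN U)" and b: "fa_cont_bilinear (upow CN U) \<beta>"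
    then obtain z where z: "a = cls U z" by (auto simp: carrier_upow)
    have "\<beta> (fa_mul (upow CN U) a (cls U (e k))) (cls U (e k)) - \<beta> (cls U (e k)) (fa_mul (upow CN U) (cls U (e k)) a) = 0" for k
    proof -
      have m1: "fa_mul (upow CN U) a (cls U (e k)) = fa_smul (upow CN U) (z k) (cls U (e k))"
        unfolding z mul_cls smul_cls by (rule arg_cong[where f="cls U"]) (auto simp: e_def fun_eq_iff)
      have m2: "fa_mul (upow CN U) (cls U (e k)) a = fa_smul (upow CN U) (z k) (cls U (e k))"
        unfolding z mul_cls smul_cls by (rule arg_cong[where f="cls U"]) (auto simp: e_def fun_eq_iff)
      have c: "cls U (e k) \<in> fa_carrier (upow CN U)" by (simp add: carrier_upow)
      show ?thesis unfolding m1 m2 using b c unfolding fa_cont_bilinear_def by simp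
    qed
    then show "(\<lambda>k. \<beta> (fa_mul (upow CN U) a (cls U (e k))) (cls U (e k)) - \<beta> (cls U (e k)) (fa_mul (upow CN U) (cls U (e k)) a)) sums 0"
      by simp
  qed
qed

end

theorem mainTheorem14:
  fixes U :: "'i set set"
  assumes "ultrafilter_on U"
    and "countably_incomplete U"
    and "aleph_plus_good CN U"
  shows "fa_isomorphic (upow CN U) CN \<and> has_AP (upow CN U) \<and> fa_contractible (upow CN U)"
  using iso[OF assms(1)] AP[OF assms(1)] contr[OF assms(1)] by blast

end
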